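(* For any semistandard Young tableau $T$ (of partition shape, entries in $\{1,\dots,N\}$), $\mathbf u_{\mathrm{colword}(T)}\equiv\mathbf u_{\mathrm{diagread}(T)}\pmod{I_{\mathrm B}}$.
   Context: $\mathcal U=\mathbb Z\langle u_1,\dots,u_N\rangle$; $\mathbf u_{\mathsf w}=u_{\mathsf w_1}\cdots u_{\mathsf w_n}$. $I_{\mathrm B}$ is the two-sided ideal generated by $u_b^2u_a+u_au_bu_a-u_bu_au_b-u_bu_a^2$ ($a<b$), $u_bu_cu_a-u_bu_au_c$ and $u_au_cu_b-u_cu_au_b$ ($a<b<c$). Tableaux are in English convention. $\mathrm{colword}(T)$ concatenates the columns of $T$, each read bottom to top, starting with the leftmost column. $\mathrm{diagread}(T)$ concatenates the diagonals of $T$ (cells $(i,j)$ with fixed $j-i$), each read in the southeast direction, starting with the southwesternmost diagonal. *)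

theory Defs
  imports Main
begin

text \<open>Elements of the free associative ring Z<u_1,...,u_N> are modelled as functions
from words (lists of letter indices) to integer coefficients, with finite support
contained in words over the alphabet {1..N}.\<close>

type_synonym ncpoly = "nat list \<Rightarrow> int"

definition ncpoly_in :: "nat \<Rightarrow> ncpoly \<Rightarrow> bool" where
  "ncpoly_in N p \<longleftrightarrow> finite {w. p w \<noteq> 0} \<and> (\<forall>w. p w \<noteq> 0 \<longrightarrow> set w \<subseteq> {1..N})"

definition mon :: "nat list \<Rightarrow> ncpoly" where
  "mon w = (\<lambda>v. if v = w then 1 else 0)"

definition ncadd :: "ncpoly \<Rightarrow> ncpoly \<Rightarrow> ncpoly" where
  "ncadd p q = (\<lambda>w. p w + q w)"

definition ncsub :: "ncpoly \<Rightarrow> ncpoly \<Rightarrow> ncpoly" where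
  "ncsub p q = (\<lambda>w. p w - q w)"

definition ncmul :: "ncpoly \<Rightarrow> ncpoly \<Rightarrow> ncpoly" where
  "ncmul p q = (\<lambda>w. \<Sum>i\<le>length w. p (take i w) * q (drop i w))"

definition IB_gens :: "nat \<Rightarrow> ncpoly set" where
  "IB_gens N =
     {ncsub (ncsub (ncadd (mon [b,b,a]) (mon [a,b,a])) (mon [b,a,b])) (mon [b,a,a])
        | a b. 1 \<le> a \<and> a < b \<and> b \<le> N}
   \<union> {ncsub (mon [b,c,a]) (mon [b,a,c]) | a b c. 1 \<le> a \<and> a < b \<and> b < c \<and> c \<le> N}
   \<union> {ncsub (mon [a,c,b]) (mon [c,a,b]) | a b c. 1 \<le> a \<and> a < b \<and> b < c \<and> c \<le> N}"

inductive_set IB :: "nat \<Rightarrow> ncpoly set" for N :: nat where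
  gen: "g \<in> IB_gens N \<Longrightarrow> g \<in> IB N"
| zero: "(\<lambda>_. 0) \<in> IB N"
| add: "p \<in> IB N \<Longrightarrow> q \<in> IB N \<Longrightarrow> ncadd p q \<in> IB N"
| sub: "p \<in> IB N \<Longrightarrow> q \<in> IB N \<Longrightarrow> ncsub p q \<in> IB N"
| lmul: "ncpoly_in N a \<Longrightarrow> p \<in> IB N \<Longrightarrow> ncmul a p \<in> IB N"
| rmul: "ncpoly_in N a \<Longrightarrow> p \<in> IB N \<Longrightarrow> ncmul p a \<in> IB N"

text \<open>Tableaux: list of rows (top row first), English convention; T!i!j is cell (i,j), 0-indexed.\<close>
definition is_SSYT :: "nat \<Rightarrow> nat list list \<Rightarrow> bool" where
  "is_SSYT N T \<longleftrightarrow>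
     (\<forall>r\<in>set T. r \<noteq> []) \<and>
     (\<forall>i. Suc i < length T \<longrightarrow> length (T ! Suc i) \<le> length (T ! i)) \<and>
     (\<forall>r\<in>set T. sorted r) \<and>
     (\<forall>i j. Suc i < length T \<and> j < length (T ! Suc i) \<longrightarrow> T ! i ! j < T ! Suc i ! j) \<and>
     (\<forall>r\<in>set T. set r \<subseteq> {1..N})"

definition num_cols :: "nat list list \<Rightarrow> nat" where
  "num_cols T = (if T = [] then 0 else length (hd T))"

definition colword :: "nat list list \<Rightarrow> nat list" where
  "colword T = concat (map (\<lambda>j. rev [T ! i ! j. i \<leftarrow> [0..<length T], j < length (T ! i)])
                           [0..<num_cols T])"

text \<open>Diagonals j - i = d, from southwesternmost (d = 1 - rows) to d = cols - 1,
  each read southeast (increasing row index).\<close>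
definition diagread :: "nat list list \<Rightarrow> nat list" where
  "diagread T = concat (map (\<lambda>d. [T ! i ! nat (int i + d).
        i \<leftarrow> [0..<length T], 0 \<le> int i + d \<and> nat (int i + d) < length (T ! i)])
     [1 - int (length T)..int (num_cols T) - 1])"

end

theory Submission
  imports Defs
begin

definition eqv :: "nat \<Rightarrow> nat list \<Rightarrow> nat list \<Rightarrow> bool" where
  "eqv N x y \<longleftrightarrow> ncsub (mon x) (mon y) \<in> IB N"

lemma ncmul_mon_left:
  "ncmul (mon u) q = (\<lambda>w. if length u \<le> length w \<and> take (length u) w = u then q (drop (length u) w) else 0)"
proof
  fix w
  have "(\<Sum>i\<le>length w. mon u (take i w) * q (drop i w)) =
        (\<Sum>i\<le>length w. if i = length u then (if take (length u) w = u then q (drop (length u) w) else 0) else 0)"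
    by (rule sum.cong) (auto simp: mon_def)
  also have "\<dots> = (if length u \<le> length w \<and> take (length u) w = u then q (drop (length u) w) else 0)"
    by (subst sum.delta) auto
  finally show "ncmul (mon u) q w = (if length u \<le> length w \<and> take (length u) w = u then q (drop (length u) w) else 0)"
    by (simp add: ncmul_def)
qed

lemma ncmul_mon_right:
  "ncmul p (mon v) = (\<lambda>w. if length v \<le> length w \<and> drop (length w - length v) w = v then p (take (length w - length v) w) else 0)"
proof
  fix w
  have "(\<Sum>i\<le>length w. p (take i w) * mon v (drop i w)) =
        (\<Sum>i\<le>length w. if i = length w - length v then (if length v \<le> length w \<and> drop (length w - length v) w = v then p (take (length w - length v) w) else 0) else 0)"
    by (rule sum.cong) (auto simp: mon_def)
  also have "\<dots> = (if length v \<le> length w \<and> drop (length w - length v) w = v then p (take (length w - length v) w) else 0)"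
    by (subst sum.delta) auto
  finally show "ncmul p (mon v) w = (if length v \<le> length w \<and> drop (length w - length v) w = v then p (take (length w - length v) w) else 0)"
    by (simp add: ncmul_def)
qed

lemma decomp_aux:
  assumes "length u \<le> length w" "take (length u) w = u" "length v \<le> length w - length u"
    "drop (length w - length v) w = v"
  shows "w = u @ take (length w - (length u + length v)) (drop (length u) w) @ v"
proof -
  let ?k = "length w - (length u + length v)"
  have "drop ?k (drop (length u) w) = drop (length w - length v) w"
    using assms(1,3) by (simp add: add.commute)
  then have "drop (length u) w = take ?k (drop (length u) w) @ v"
    using assms(4) by (metis append_take_drop_id)
  then show ?thesis using assms(2) by (metis append_take_drop_id)
qed

lemma mul_ctx:
  "ncmul (mon u) (ncmul (ncsub (mon x) (mon y)) (mon v)) = ncsub (mon (u@x@v)) (mon (u@y@v))"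
proof
  fix w
  show "ncmul (mon u) (ncmul (ncsub (mon x) (mon y)) (mon v)) w = ncsub (mon (u@x@v)) (mon (u@y@v)) w"
    unfolding ncmul_mon_left ncmul_mon_right
    apply (simp add: ncsub_def mon_def)
    apply (auto simp: append_eq_conv_conj dest: decomp_aux)
    done
qed

lemma mon_in: "set u \<subseteq> {1..N} \<Longrightarrow> ncpoly_in N (mon u)"
  by (auto simp: ncpoly_in_def mon_def)

lemma eqv_refl: "eqv N x x"
proof -
  have "ncsub (mon x) (mon x) = (\<lambda>_. 0)" by (auto simp: ncsub_def)
  then show ?thesis unfolding eqv_def using IB.zero by simp
qed

lemma eqv_trans: "eqv N x y \<Longrightarrow> eqv N y z \<Longrightarrow> eqv N x z"
proof -
  assume a: "eqv N x y" "eqv N y z"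
  have "ncadd (ncsub (mon x) (mon y)) (ncsub (mon y) (mon z)) = ncsub (mon x) (mon z)"
    by (auto simp: ncsub_def ncadd_def)
  then show ?thesis using IB.add[OF a[unfolded eqv_def]] unfolding eqv_def by simp
qed

lemma eqv_ctx:
  assumes "eqv N x y" "set u \<subseteq> {1..N}" "set v \<subseteq> {1..N}"
  shows "eqv N (u@x@v) (u@y@v)"
  using IB.lmul[OF mon_in[OF assms(2)] IB.rmul[OF mon_in[OF assms(3)] assms(1)[unfolded eqv_def]]]
  unfolding eqv_def mul_ctx .

lemma eqv_base:
  assumes "1 \<le> a" "a < b" "b < c" "c \<le> N"
  shows "eqv N [a,c,b] [c,a,b]"
  unfolding eqv_def
  by (rule IB.gen) (use assms in \<open>auto simp: IB_gens_def\<close>)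


lemma lemA:
  assumes "sorted_wrt (>) (C @ [b])" "a < b" "1 \<le> a" "set C \<subseteq> {1..N}" "b \<le> N"
    "set R \<subseteq> {1..N}"
  shows "eqv N (a # C @ b # R) (C @ a # b # R)"
  using assms
proof (induction C)
  case Nil then show ?case by (simp add: eqv_refl)
next
  case (Cons c C')
  obtain x rest where xr: "C' @ b # R = x # rest" "x \<in> set (C' @ [b])"
    by (cases C') auto
  have xc: "x < c" using Cons.prems(1) xr(2) by auto
  have ax: "a < x"
  proof -
    have "x = b \<or> x \<in> set C'" using xr(2) by auto
    moreover have "\<forall>y\<in>set C'. b < y" using Cons.prems(1) by (simp add: sorted_wrt_append)
    ultimately show ?thesis using Cons.prems(2) by auto
  qed
  have cN: "c \<le> N" using Cons.prems(4) by auto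
  have restN: "set rest \<subseteq> {1..N}"
  proof -
    have "set (C' @ b # R) \<subseteq> {1..N}" using Cons.prems by auto
    then show ?thesis using xr(1) by auto
  qed
  have s1: "eqv N ([] @ [a,c,x] @ rest) ([] @ [c,a,x] @ rest)"
    by (rule eqv_ctx[OF eqv_base]) (use Cons.prems ax xc cN restN in auto)
  have s2: "eqv N ([c] @ (a # C' @ b # R) @ []) ([c] @ (C' @ a # b # R) @ [])"
    by (rule eqv_ctx[OF Cons.IH]) (use Cons.prems in \<open>auto simp: sorted_wrt_append\<close>)
  show ?case using eqv_trans[OF s1[simplified, folded xr(1)] s2[simplified]] by simp
qed

lemma lemB:
  assumes "sorted_wrt (>) C" "sorted_wrt (<) Z" "\<forall>z\<in>set Z. \<forall>c\<in>set C. z < c"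
    "Z \<noteq> [] \<Longrightarrow> C \<noteq> [] \<Longrightarrow> R \<noteq> [] \<and> (\<forall>z\<in>set Z. z < hd R) \<and> (\<forall>c\<in>set C. hd R < c)"
    "set Z \<subseteq> {1..N}" "set C \<subseteq> {1..N}" "set R \<subseteq> {1..N}"
  shows "eqv N (Z @ C @ R) (C @ Z @ R)"
proof (cases "C = []")
  case True then show ?thesis by (simp add: eqv_refl)
next
  case Cne: False
  show ?thesis using assms
  proof (induction Z)
    case Nil then show ?case by (simp add: eqv_refl)
  next
    case (Cons z Z')
    have IH: "eqv N (Z' @ C @ R) (C @ Z' @ R)"
      by (rule Cons.IH) (use Cons.prems in auto)
    have s1: "eqv N ([z] @ (Z' @ C @ R) @ []) ([z] @ (C @ Z' @ R) @ [])"
      by (rule eqv_ctx[OF IH]) (use Cons.prems in auto)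
    have ne: "Z' @ R \<noteq> []" using Cons.prems(4) Cne by auto
    obtain b rest where br: "Z' @ R = b # rest" using ne by (cases "Z' @ R") auto
    have bprop: "z < b \<and> (\<forall>c\<in>set C. b < c)"
    proof (cases Z')
      case Nil
      then show ?thesis using Cons.prems(4) Cne br by auto
    next
      case (Cons z' Z'')
      then have "b = z'" using br by auto
      then show ?thesis using Cons.prems(2,3) \<open>Z' = z' # Z''\<close> by auto
    qed
    have "set (Z' @ R) \<subseteq> {1..N}" using Cons.prems(5,7) by auto
    then have bN: "b \<in> {1..N}" and restN: "set rest \<subseteq> {1..N}" unfolding br by auto
    have s2: "eqv N (z # C @ b # rest) (C @ z # b # rest)"
      by (rule lemA) (use Cons.prems(1,5,6) bprop bN restN in \<open>auto simp: sorted_wrt_append\<close>)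
    show ?case using eqv_trans[OF s1[simplified] s2[folded br]] by simp
  qed
qed

definition Qrel :: "nat list \<times> nat list \<Rightarrow> nat list \<times> nat list \<Rightarrow> bool" where
  "Qrel x y \<longleftrightarrow> (\<forall>z\<in>set (fst y). \<forall>c\<in>set (snd x). z < c) \<and>
     (fst y \<noteq> [] \<longrightarrow> snd x \<noteq> [] \<longrightarrow> snd y \<noteq> [] \<and> (\<forall>z\<in>set (fst y). z < hd (snd y)))"

lemma blocks:
  assumes "sorted_wrt (>) (concat (map snd L))" "\<forall>x\<in>set L. sorted_wrt (<) (fst x)"
    "sorted_wrt Qrel L" "\<forall>x\<in>set L. set (fst x) \<subseteq> {1..N} \<and> set (snd x) \<subseteq> {1..N}"
    "set R \<subseteq> {1..N}"
  shows "eqv N (concat (map fst L) @ concat (map snd L) @ R) (concat (map (\<lambda>x. fst x @ snd x) L) @ R)"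
  using assms
proof (induction L arbitrary: R rule: rev_induct)
  case Nil then show ?case by (simp add: eqv_refl)
next
  case (snoc x L')
  obtain A e where x: "x = (A, e)" by (cases x)
  let ?CA = "concat (map fst L')" and ?CE = "concat (map snd L')"
  have sCE: "sorted_wrt (>) (?CE @ e)" using snoc.prems(1) x by simp
  have Q: "\<forall>y\<in>set L'. Qrel y (A, e)" using snoc.prems(3) x by (simp add: sorted_wrt_append)
  have let1: "set ?CE \<subseteq> {1..N}" "set ?CA \<subseteq> {1..N}" using snoc.prems(4) by auto
  have let2: "set A \<subseteq> {1..N}" "set e \<subseteq> {1..N}" using snoc.prems(4) x by auto
  have B: "eqv N (A @ ?CE @ (e @ R)) (?CE @ A @ (e @ R))"
  proof (rule lemB)
    show "sorted_wrt (>) ?CE" using sCE by (simp add: sorted_wrt_append)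
    show "sorted_wrt (<) A" using snoc.prems(2) x by simp
    show "\<forall>z\<in>set A. \<forall>c\<in>set ?CE. z < c" using Q by (auto simp: Qrel_def)
    show "e @ R \<noteq> [] \<and> (\<forall>z\<in>set A. z < hd (e @ R)) \<and> (\<forall>c\<in>set ?CE. hd (e @ R) < c)"
      if h1: "A \<noteq> []" and h2: "?CE \<noteq> []"
    proof -
      obtain y where y: "y \<in> set L'" "snd y \<noteq> []" using h2 by auto
      have "e \<noteq> [] \<and> (\<forall>z\<in>set A. z < hd e)" using Q y h1 by (auto simp: Qrel_def)
      moreover have "\<forall>c\<in>set ?CE. hd e < c" if "e \<noteq> []"
        using sCE that by (auto simp: sorted_wrt_append)
      ultimately show ?thesis by auto
    qed
  qed (use let1 let2 snoc.prems(5) in auto)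
  have s1: "eqv N (?CA @ (A @ ?CE @ e @ R) @ []) (?CA @ (?CE @ A @ e @ R) @ [])"
    by (rule eqv_ctx[OF B]) (use let1 in auto)
  have IH: "eqv N (?CA @ ?CE @ (A @ e @ R)) (concat (map (\<lambda>x. fst x @ snd x) L') @ (A @ e @ R))"
    by (rule snoc.IH) (use snoc.prems let2 in \<open>auto simp: sorted_wrt_append\<close>)
  show ?case using eqv_trans[OF s1[simplified] IH] x by simp
qed


lemma set_compr: "set [f i. i \<leftarrow> xs, P i] = f ` {i \<in> set xs. P i}"
  by (induction xs) auto

lemma sortedC:
  assumes "\<And>i j. i < j \<Longrightarrow> j < M \<Longrightarrow> P i \<Longrightarrow> P j \<Longrightarrow> R (f i) (f j)"
  shows "sorted_wrt R [f i. i \<leftarrow> [0..<M], P i]"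
  using assms
proof (induction M)
  case 0 then show ?case by simp
next
  case (Suc M)
  have IH: "sorted_wrt R [f i. i \<leftarrow> [0..<M], P i]" by (rule Suc.IH) (use Suc.prems in auto)
  have "\<forall>x\<in>set [f i. i \<leftarrow> [0..<M], P i]. \<forall>y\<in>set (if P M then [f M] else []). R x y"
    unfolding set_compr using Suc.prems by auto
  then show ?case using IH by (simp add: sorted_wrt_append)
qed

lemma gen: "[f i. i \<leftarrow> [0..<M], 0 \<le> int i + d \<and> nat (int i + d) < min (Suc k) (len i)] = [f i. i \<leftarrow> [0..<M], 0 \<le> int i + d \<and> nat (int i + d) < min k (len i)] @ (if 0 \<le> int k - d \<and> nat (int k - d) < M \<and> k < len (nat (int k - d)) then [f (nat (int k - d))] else [])"
proof (induction M)
  case 0 then show ?case by simp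
next
  case (Suc M)
  show ?case
  proof (cases "int M + d = int k")
    case True
    then have "nat (int k - d) = M" by simp
    then show ?thesis using Suc.IH True by auto
  qed (use Suc.IH in auto)
qed

definition diagk :: "nat list list \<Rightarrow> nat \<Rightarrow> int \<Rightarrow> nat list" where
  "diagk T k d = [T ! i ! nat (int i + d). i \<leftarrow> [0..<length T], 0 \<le> int i + d \<and> nat (int i + d) < min k (length (T ! i))]"

definition ek :: "nat list list \<Rightarrow> nat \<Rightarrow> int \<Rightarrow> nat list" where
  "ek T k d = (if 0 \<le> int k - d \<and> nat (int k - d) < length T \<and> k < length (T ! nat (int k - d)) then [T ! nat (int k - d) ! k] else [])"

definition colk :: "nat list list \<Rightarrow> nat \<Rightarrow> nat list" where
  "colk T j = [T ! i ! j. i \<leftarrow> [0..<length T], j < length (T ! i)]"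

definition dsT :: "nat list list \<Rightarrow> int list" where
  "dsT T = [1 - int (length T)..int (num_cols T) - 1]"

definition W :: "nat list list \<Rightarrow> nat \<Rightarrow> nat list" where
  "W T k = concat (map (diagk T k) (dsT T)) @ concat (map (\<lambda>j. rev (colk T j)) [k..<num_cols T])"

lemma diag_step: "diagk T (Suc k) d = diagk T k d @ ek T k d"
proof -
  have *: "0 \<le> int k - d \<Longrightarrow> nat (int (nat (int k - d)) + d) = k" by simp
  show ?thesis unfolding diagk_def ek_def gen using * by auto
qed

lemma W0: "W T 0 = colword T"
  by (simp add: W_def diagk_def colword_def colk_def)

lemma upto_rev: "map (\<lambda>i. k - int i) (rev [0..<m]) = [k - int m + 1..k]"
proof (induction m)
  case 0 then show ?case by simp
next
  case (Suc m)
  have "[k - int (Suc m) + 1..k] = (k - int m) # [k - int m + 1..k]"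
    by (subst upto_rec1) auto
  then show ?case using Suc by simp
qed

lemma rev_compr: "rev [f i. i \<leftarrow> xs, P i] = [f i. i \<leftarrow> rev xs, P i]"
  by (induction xs) auto

lemma col_ek:
  assumes "k < num_cols T"
  shows "rev (colk T k) = concat (map (ek T k) (dsT T))"
proof -
  let ?m = "length T" and ?n = "num_cols T"
  have Tne: "T \<noteq> []" using assms by (auto simp: num_cols_def)
  then have m1: "?m \<ge> 1" by (cases T) auto
  have sp: "dsT T = [1 - int ?m..int k - int ?m] @ [int k - int ?m + 1..int k] @ [int k + 1..int ?n - 1]"
  proof -
    have "dsT T = [1 - int ?m..(int k - int ?m + 1) - 1] @ [int k - int ?m + 1..int ?n - 1]"
      unfolding dsT_def by (rule upto_split1) (use assms m1 in auto)
    also have "[int k - int ?m + 1..int ?n - 1] = [int k - int ?m + 1..int k] @ [int k + 1..int ?n - 1]"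
      by (rule upto_split2) (use assms m1 in auto)
    finally show ?thesis by simp
  qed
  have e1: "concat (map (ek T k) [1 - int ?m..int k - int ?m]) = []"
    by (auto simp: ek_def)
  have e3: "concat (map (ek T k) [int k + 1..int ?n - 1]) = []"
    by (auto simp: ek_def)
  have "concat (map (ek T k) [int k - int ?m + 1..int k]) =
        concat (map (ek T k) (map (\<lambda>i. int k - int i) (rev [0..<?m])))"
    by (simp add: upto_rev)
  also have "\<dots> = [T ! i ! k. i \<leftarrow> rev [0..<?m], k < length (T ! i)]"
    by (auto simp: ek_def intro!: arg_cong[where f=concat] map_cong)
  also have "\<dots> = rev (colk T k)" by (simp add: colk_def rev_compr)
  finally have mid: "concat (map (ek T k) [int k - int ?m + 1..int k]) = rev (colk T k)" .
  show ?thesis unfolding sp map_append concat_append e1 e3 mid by simp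
qed


context
  fixes N :: nat and T :: "nat list list"
  assumes ssyt: "is_SSYT N T"
begin

lemma F_len: "i \<le> i' \<Longrightarrow> i' < length T \<Longrightarrow> length (T ! i') \<le> length (T ! i)"
proof (induction i')
  case 0 then show ?case by simp
next
  case (Suc i')
  show ?case
  proof (cases "i = Suc i'")
    case False
    then have "length (T ! i') \<le> length (T ! i)" using Suc by auto
    moreover have "length (T ! Suc i') \<le> length (T ! i')" using ssyt Suc.prems by (auto simp: is_SSYT_def)
    ultimately show ?thesis by simp
  qed simp
qed

lemma F_col: "i < i' \<Longrightarrow> i' < length T \<Longrightarrow> j < length (T ! i') \<Longrightarrow> T ! i ! j < T ! i' ! j"
proof (induction i')
  case 0 then show ?case by simp
next
  case (Suc i')
  have st: "T ! i' ! j < T ! Suc i' ! j" using ssyt Suc.prems by (auto simp: is_SSYT_def)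
  show ?case
  proof (cases "i = i'")
    case False
    have "j < length (T ! i')" using F_len[of i' "Suc i'"] Suc.prems by simp
    then have "T ! i ! j < T ! i' ! j" using Suc False by auto
    then show ?thesis using st by simp
  qed (use st in simp)
qed

lemma F_row: "i < length T \<Longrightarrow> j \<le> j' \<Longrightarrow> j' < length (T ! i) \<Longrightarrow> T ! i ! j \<le> T ! i ! j'"
proof -
  assume a: "i < length T" "j \<le> j'" "j' < length (T ! i)"
  have "sorted (T ! i)" using ssyt a(1) by (auto simp: is_SSYT_def)
  then show ?thesis using a by (simp add: sorted_nth_mono)
qed

lemma F_lt: "i < i' \<Longrightarrow> i' < length T \<Longrightarrow> j \<le> j' \<Longrightarrow> j' < length (T ! i') \<Longrightarrow> T ! i ! j < T ! i' ! j'"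
proof -
  assume a: "i < i'" "i' < length T" "j \<le> j'" "j' < length (T ! i')"
  have "j' < length (T ! i)" using F_len[of i i'] a by simp
  then have "T ! i ! j \<le> T ! i ! j'" using F_row a by simp
  also have "\<dots> < T ! i' ! j'" using F_col a by simp
  finally show ?thesis .
qed

lemma F_set: "i < length T \<Longrightarrow> j < length (T ! i) \<Longrightarrow> T ! i ! j \<in> {1..N}"
proof -
  assume a: "i < length T" "j < length (T ! i)"
  have "set (T ! i) \<subseteq> {1..N}" using ssyt a(1) by (auto simp: is_SSYT_def)
  then show ?thesis using a(2) by (meson nth_mem subsetD)
qed

lemma F_n: "i < length T \<Longrightarrow> length (T ! i) \<le> num_cols T"
  using F_len[of 0 i] by (cases T) (auto simp: num_cols_def)

lemma mem_diag: "z \<in> set (diagk T k d) \<longleftrightarrow> (\<exists>i. i < length T \<and> 0 \<le> int i + d \<and> nat (int i + d) < k \<and> nat (int i + d) < length (T ! i) \<and> z = T ! i ! nat (int i + d))"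
  unfolding diagk_def set_compr by auto

lemma mem_col: "z \<in> set (colk T j) \<longleftrightarrow> (\<exists>i. i < length T \<and> j < length (T ! i) \<and> z = T ! i ! j)"
  unfolding colk_def set_compr by auto

lemma diag_letters: "set (diagk T k d) \<subseteq> {1..N}"
  using F_set by (auto simp: mem_diag)

lemma col_letters: "set (colk T j) \<subseteq> {1..N}"
  using F_set by (auto simp: mem_col)

lemma ek_letters: "set (ek T k d) \<subseteq> {1..N}"
  using F_set by (auto simp: ek_def)

lemma diag_sorted: "sorted_wrt (<) (diagk T k d)"
  unfolding diagk_def
  by (rule sortedC) (auto intro!: F_lt)

lemma col_sorted: "sorted_wrt (<) (colk T j)"
  unfolding colk_def
  by (rule sortedC) (auto intro!: F_col)

lemma Qpair:
  assumes "d < d'"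
  shows "Qrel (diagk T k d, ek T k d) (diagk T k d', ek T k d')"
  unfolding Qrel_def fst_conv snd_conv
proof (intro conjI impI ballI)
  fix z c
  assume z: "z \<in> set (diagk T k d')" and c: "c \<in> set (ek T k d)"
  obtain i where i: "i < length T" "0 \<le> int i + d'" "nat (int i + d') < k" "nat (int i + d') < length (T ! i)"
    "z = T ! i ! nat (int i + d')" using z mem_diag by auto
  have r: "0 \<le> int k - d" "nat (int k - d) < length T" "k < length (T ! nat (int k - d))"
    "c = T ! nat (int k - d) ! k" using c by (auto simp: ek_def split: if_splits)
  have "i < nat (int k - d)" using i(2,3) assms by linarith
  then show "z < c" using F_lt[of i "nat (int k - d)" "nat (int i + d')" k] i r by simp
next
  assume ne: "diagk T k d' \<noteq> []" and ne2: "ek T k d \<noteq> []"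
  obtain z where "z \<in> set (diagk T k d')" using ne by (cases "diagk T k d'") auto
  then obtain i where i: "i < length T" "0 \<le> int i + d'" "nat (int i + d') < k" by (auto simp: mem_diag)
  have r: "0 \<le> int k - d" "nat (int k - d) < length T" "k < length (T ! nat (int k - d))"
    using ne2 by (auto simp: ek_def split: if_splits)
  have r1: "0 \<le> int k - d'" using i by linarith
  have r2: "nat (int k - d') \<le> nat (int k - d)" using assms by linarith
  have r3: "nat (int k - d') < length T" using r r2 by linarith
  have r4: "k < length (T ! nat (int k - d'))" using F_len[OF r2] r by linarith
  have eq: "ek T k d' = [T ! nat (int k - d') ! k]" using r1 r3 r4 by (simp add: ek_def)
  show "ek T k d' \<noteq> []" using eq by simp
  fix z' assume "z' \<in> set (diagk T k d')"
  then obtain i' where i': "i' < length T" "0 \<le> int i' + d'" "nat (int i' + d') < k"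
    "z' = T ! i' ! nat (int i' + d')" by (auto simp: mem_diag)
  have "i' < nat (int k - d')" using i' by linarith
  then show "z' < hd (ek T k d')" unfolding eq using F_lt[of i' "nat (int k - d')" "nat (int i' + d')" k] i' r3 r4 by simp
qed

lemma Wn: "W T (num_cols T) = diagread T"
proof -
  have "diagk T (num_cols T) d = [T ! i ! nat (int i + d). i \<leftarrow> [0..<length T], 0 \<le> int i + d \<and> nat (int i + d) < length (T ! i)]" for d
    unfolding diagk_def
    apply (auto intro!: arg_cong[where f=concat] map_cong simp: min_absorb2)
    by (metis F_n order_less_le_trans)
  then have "diagk T (num_cols T) = (\<lambda>d. [T ! i ! nat (int i + d). i \<leftarrow> [0..<length T], 0 \<le> int i + d \<and> nat (int i + d) < length (T ! i)])"
    by (rule ext)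
  then show ?thesis by (simp add: W_def diagread_def dsT_def)
qed

lemma Wstep:
  assumes k: "k < num_cols T"
  shows "eqv N (W T k) (W T (Suc k))"
proof -
  define L where "L = map (\<lambda>d. (diagk T k d, ek T k d)) (dsT T)"
  define R where "R = concat (map (\<lambda>j. rev (colk T j)) [Suc k..<num_cols T])"
  have e1: "W T k = concat (map fst L) @ concat (map snd L) @ R"
    unfolding W_def L_def R_def using k col_ek[OF k] by (simp add: upt_conv_Cons comp_def)
  have e2: "W T (Suc k) = concat (map (\<lambda>x. fst x @ snd x) L) @ R"
  proof -
    have "diagk T (Suc k) = (\<lambda>d. diagk T k d @ ek T k d)" by (rule ext) (rule diag_step)
    then show ?thesis unfolding W_def L_def R_def by (simp add: comp_def)
  qed
  have "eqv N (concat (map fst L) @ concat (map snd L) @ R) (concat (map (\<lambda>x. fst x @ snd x) L) @ R)"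
  proof (rule blocks)
    have "concat (map snd L) = rev (colk T k)" unfolding L_def using col_ek[OF k] by (simp add: comp_def)
    then show "sorted_wrt (>) (concat (map snd L))" using col_sorted by (simp add: sorted_wrt_rev)
    show "\<forall>x\<in>set L. sorted_wrt (<) (fst x)" unfolding L_def using diag_sorted by auto
    show "sorted_wrt Qrel L" unfolding L_def sorted_wrt_map
      by (rule sorted_wrt_mono_rel[OF _ sorted_wrt_upto[of "1 - int (length T)" "int (num_cols T) - 1", folded dsT_def]])
        (use Qpair in auto)
    show "\<forall>x\<in>set L. set (fst x) \<subseteq> {1..N} \<and> set (snd x) \<subseteq> {1..N}"
      unfolding L_def using diag_letters ek_letters by auto
    show "set R \<subseteq> {1..N}" unfolding R_def using col_letters by auto
  qed
  then show ?thesis using e1 e2 by simp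
qed

lemma Wall: "k \<le> num_cols T \<Longrightarrow> eqv N (W T 0) (W T k)"
proof (induction k)
  case 0 then show ?case by (simp add: eqv_refl)
next
  case (Suc k)
  then show ?case using Wstep[of k] eqv_trans by auto
qed

end

theorem proposition9p10:
  fixes N :: nat and T :: "nat list list"
  assumes "is_SSYT N T"
  shows "ncsub (mon (colword T)) (mon (diagread T)) \<in> IB N"
  using Wall[OF assms order_refl] W0 Wn[OF assms] by (simp add: eqv_def)

end
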